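(* Let $d_{in}, d_K, d_V, M$ be positive integers, let $W_Q, W_K \in \mathbb{R}^{d_{in}\times d_K}$ and $W_V \in \mathbb{R}^{d_{in}\times d_V}$ be weight matrices, let $b_{KV}\in\mathbb{R}^{d_K\times d_V}$ be a bias matrix, and let $X'\in\mathbb{R}^{M\times d_{in}}$ be a fixed matrix (the in-context prompt, whose rows are tokens). For matrices $Q\in\mathbb{R}^{n\times d_K}$, $K\in\mathbb{R}^{n\times d_K}$, $V\in\mathbb{R}^{n\times d_V}$ and $b\in\mathbb{R}^{d_K\times d_V}$ define the linear attention with Key-Value bias $$\mathrm{LinAttn}(Q,K,V,b) = Q\,(K^{T}V + b)\in\mathbb{R}^{n\times d_V}.$$ Set $$b'_{KV} = b_{KV} + W_K^{T}X'^{T}X'W_V.$$ Then for every $N\ge 1$ and every $X\in\mathbb{R}^{N\times d_{in}}$, writing $[X';X]\in\mathbb{R}^{(M+N)\times d_{in}}$ for the row-wise concatenation of $X'$ followed by $X$, the last $N$ rows of $$\mathrm{LinAttn}([X';X]W_Q,\,[X';X]W_K,\,[X';X]W_V,\,b_{KV})$$ are equal to $$\mathrm{LinAttn}(XW_Q,\,XW_K,\,XW_V,\,b'_{KV}).$$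
   Context: Tokens are the rows of the matrices $X'$ and $X$; $[X';X]$ denotes stacking the rows of $X'$ on top of the rows of $X$. No causal mask and no positional encoding are used in this linear attention. *)

theory Defs
  imports "HOL-Analysis.Analysis"
begin

text \<open>Linear attention with Key-Value bias: LinAttn(Q,K,V,b) = Q (K^T V + b).
  Matrices are HOL-Analysis matrices real^cols^rows; row i of A is A $ i.\<close>
definition LinAttn ::
  "real^'dk^'r \<Rightarrow> real^'dk^'r \<Rightarrow> real^'dv^'r \<Rightarrow> real^'dv^'dk \<Rightarrow> real^'dv^'r" where
  "LinAttn Q K V b = Q ** (transpose K ** V + b)"

definition stack_rows :: "'a^'c^'m \<Rightarrow> 'a^'c^'n \<Rightarrow> 'a^'c^('m + 'n)" where
  "stack_rows A B = (\<chi> i. case i of Inl a \<Rightarrow> A $ a | Inr b \<Rightarrow> B $ b)"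

end

theory Submission
  imports Defs
begin

lemma stack_gram:
  fixes Xp :: "real^'din::finite^'m::finite" and X :: "real^'din^'n::finite"
  shows "transpose (stack_rows Xp X) ** stack_rows Xp X = transpose Xp ** Xp + transpose X ** X"
proof -
  have U: "(UNIV :: ('m + 'n) set) = UNIV <+> UNIV" by simp
  show ?thesis
    unfolding matrix_matrix_mult_def transpose_def stack_rows_def
    by (simp add: vec_eq_iff U sum.Plus del: UNIV_Plus_UNIV)
qed

lemma matrix_add_rdistrib:
  fixes A B :: "real^'n::finite^'m::finite" and C :: "real^'p::finite^'n"
  shows "(A + B) ** C = A ** C + B ** C"
  by (vector matrix_matrix_mult_def sum.distrib[symmetric] field_simps)

lemma stack_row:
  fixes Xp :: "real^'din::finite^'m::finite" and X :: "real^'din^'n::finite"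
    and W :: "real^'k::finite^'din"
  shows "(stack_rows Xp X ** W) $ Inr j = (X ** W) $ j"
  by (simp add: matrix_matrix_mult_def stack_rows_def)

lemma row_mult:
  fixes A :: "real^'k::finite^'r::finite" and B :: "real^'k^'s::finite" and C :: "real^'v::finite^'k"
  shows "A $ i = B $ j \<Longrightarrow> (A ** C) $ i = (B ** C) $ j"
  by (simp add: matrix_matrix_mult_def)

theorem theorem4p1:
  fixes WQ WK :: "real^'dk::finite^'din::finite"
    and WV :: "real^'dv::finite^'din"
    and bKV :: "real^'dv^'dk"
    and Xp :: "real^'din^'m::finite"
    and X :: "real^'din^'n::finite"
  shows "\<forall>j. (LinAttn (stack_rows Xp X ** WQ) (stack_rows Xp X ** WK) (stack_rows Xp X ** WV) bKV) $ Inr j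
           = (LinAttn (X ** WQ) (X ** WK) (X ** WV)
                (bKV + transpose WK ** transpose Xp ** Xp ** WV)) $ j"
proof
  fix j
  let ?S = "stack_rows Xp X"
  have "transpose (?S ** WK) ** (?S ** WV) + bKV
      = transpose (X ** WK) ** (X ** WV) + (bKV + transpose WK ** transpose Xp ** Xp ** WV)"
  proof -
    have "transpose (?S ** WK) ** (?S ** WV) = transpose WK ** (transpose ?S ** ?S) ** WV"
      by (simp only: matrix_transpose_mul matrix_mul_assoc)
    also have "\<dots> = transpose WK ** (transpose Xp ** Xp) ** WV + transpose WK ** (transpose X ** X) ** WV"
      by (simp only: stack_gram matrix_add_ldistrib matrix_add_rdistrib)
    also have "transpose WK ** (transpose Xp ** Xp) ** WV = transpose WK ** transpose Xp ** Xp ** WV"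
      by (simp only: matrix_mul_assoc)
    also have "transpose WK ** (transpose X ** X) ** WV = transpose (X ** WK) ** (X ** WV)"
      by (simp only: matrix_transpose_mul matrix_mul_assoc)
    finally show ?thesis by (simp only: ac_simps)
  qed
  note eq = this
  show "(LinAttn (?S ** WQ) (?S ** WK) (?S ** WV) bKV) $ Inr j
           = (LinAttn (X ** WQ) (X ** WK) (X ** WV)
                (bKV + transpose WK ** transpose Xp ** Xp ** WV)) $ j"
    unfolding LinAttn_def eq by (rule row_mult[OF stack_row])
qed

end
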